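(* Let $m$ be a positive integer, $n=m(m+1)/2$, write $\prod_{i=1}^m(1-X^i)=\sum_{i=0}^nc_iX^i$, and set $d_j=\sum_{i=0}^{n-j}c_i$ for $j=1,\dots,n$. Then for every non-empty $S\subseteq[1,m]$, $$\sum_{j=1}^n d_j\,r(j,S)=\sum_{j=1}^n d_j\,p(j,S)=\begin{cases}1&\text{if }S=[1,m],\\0&\text{otherwise.}\end{cases}$$
   Context: $p(k,S)$ is the number of partitions of $k$ all of whose parts lie in $S$. $r(k,S)$ is the number of partitions of $k$ whose set of distinct parts is exactly $S$. $[1,m]=\{1,\dots,m\}$. *)

theory Defs
  imports "HOL-Library.Multiset" "HOL-Computational_Algebra.Polynomial"
begin

definition partitions :: "nat \<Rightarrow> nat multiset set" where
  "partitions k = {M. (\<forall>x\<in>#M. 0 < x) \<and> sum_mset M = k}"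

definition p_part :: "nat \<Rightarrow> nat set \<Rightarrow> nat" where
  "p_part k S = card {M \<in> partitions k. set_mset M \<subseteq> S}"

definition r_part :: "nat \<Rightarrow> nat set \<Rightarrow> nat" where
  "r_part k S = card {M \<in> partitions k. set_mset M = S}"

definition euler_poly :: "nat \<Rightarrow> int poly" where
  "euler_poly m = (\<Prod>i=1..m. 1 - monom 1 i)"

definition c_coeff :: "nat \<Rightarrow> nat \<Rightarrow> int" where
  "c_coeff m i = coeff (euler_poly m) i"

definition d_coeff :: "nat \<Rightarrow> nat \<Rightarrow> int" where
  "d_coeff m j = (\<Sum>i=0..(m * (m + 1) div 2) - j. c_coeff m i)"

end

theory Submission
  imports Defs "HOL-Computational_Algebra.Polynomial_FPS"
begin

unbundle fps_syntax

lemma size_le_sum_pos: "(\<forall>x\<in>#M. 0 < (x::nat)) \<Longrightarrow> size M \<le> sum_mset M"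
  by (induction M) auto

lemma sum_ge_mem: "(x::nat) \<in># M \<Longrightarrow> x \<le> sum_mset M"
  by (induction M) auto

lemma finite_parts: "finite {M \<in> partitions k. set_mset M \<subseteq> S}"
proof -
  have "{M \<in> partitions k. set_mset M \<subseteq> S} \<subseteq> (\<Union>s\<in>{0..k}. multisets_of_size {1..k} s)"
  proof
    fix M assume "M \<in> {M \<in> partitions k. set_mset M \<subseteq> S}"
    then have pos: "\<forall>x\<in>#M. 0 < x" and s: "sum_mset M = k" by (auto simp: partitions_def)
    have "size M \<le> k" using size_le_sum_pos[OF pos] s by simp
    moreover have "set_mset M \<subseteq> {1..k}"
    proof
      fix x assume x: "x \<in># M"
      then have "0 < x" using pos by auto
      moreover have "x \<le> k" using sum_ge_mem[OF x] s by simp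
      ultimately show "x \<in> {1..k}" by simp
    qed
    ultimately show "M \<in> (\<Union>s\<in>{0..k}. multisets_of_size {1..k} s)"
      by (auto simp: multisets_of_size_def)
  qed
  then show ?thesis by (rule finite_subset) (intro finite_UN_I finite_atLeastAtMost finite_multisets_of_size)
qed

definition Fp :: "nat set \<Rightarrow> int fps" where
  "Fp S = Abs_fps (\<lambda>k. int (p_part k S))"

definition Qf :: "nat set \<Rightarrow> int fps" where
  "Qf S = (\<Prod>s\<in>S. 1 - fps_X ^ s)"

lemma p_empty: "p_part k {} = (if k = 0 then 1 else 0)"
proof -
  have "{M \<in> partitions k. set_mset M \<subseteq> {}} = (if k = 0 then {{#}} else {})"
    by (auto simp: partitions_def)
  then show ?thesis by (simp add: p_part_def)
qed

lemma p_rec: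
  assumes "0 < s" "s \<notin> S"
  shows "p_part k (insert s S) = p_part k S + (if s \<le> k then p_part (k - s) (insert s S) else 0)"
proof -
  define A where "A = {M \<in> partitions k. set_mset M \<subseteq> insert s S}"
  define B where "B = {M \<in> partitions k. set_mset M \<subseteq> S}"
  define C where "C = {M \<in> A. s \<in># M}"
  have AU: "A = B \<union> C" unfolding A_def B_def C_def by auto
  have disj: "B \<inter> C = {}" unfolding B_def C_def using assms by auto
  have fB: "finite B" unfolding B_def by (rule finite_parts)
  have fC: "finite C" unfolding C_def A_def by (rule finite_subset[OF _ finite_parts[of k "insert s S"]]) auto
  have cA: "card A = card B + card C" using AU disj fB fC card_Un_disjoint by metis
  have cC: "card C = (if s \<le> k then p_part (k - s) (insert s S) else 0)"
  proof (cases "s \<le> k")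
    case True
    have "bij_betw (\<lambda>N. add_mset s N) {M \<in> partitions (k - s). set_mset M \<subseteq> insert s S} C"
    proof (rule bij_betwI[where g = "\<lambda>M. M - {#s#}"])
      show "(\<lambda>N. add_mset s N) \<in> {M \<in> partitions (k - s). set_mset M \<subseteq> insert s S} \<rightarrow> C"
        using True assms unfolding C_def A_def partitions_def by auto
      show "(\<lambda>M. M - {#s#}) \<in> C \<rightarrow> {M \<in> partitions (k - s). set_mset M \<subseteq> insert s S}"
      proof
        fix M assume M: "M \<in> C"
        then have sM: "s \<in># M" and pos: "\<forall>x\<in>#M. 0 < x" and sum: "sum_mset M = k"
          and sub: "set_mset M \<subseteq> insert s S"
          unfolding C_def A_def partitions_def by auto
        have e: "add_mset s (M - {#s#}) = M" using sM by (rule insert_DiffM)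
        have "sum_mset (M - {#s#}) = k - s" using arg_cong[OF e, of sum_mset] sum by simp
        moreover have "set_mset (M - {#s#}) \<subseteq> set_mset M" by (auto dest: in_diffD)
        ultimately show "M - {#s#} \<in> {M \<in> partitions (k - s). set_mset M \<subseteq> insert s S}"
          using pos sub unfolding partitions_def by auto
      qed
      show "\<And>x. x \<in> {M \<in> partitions (k - s). set_mset M \<subseteq> insert s S} \<Longrightarrow> add_mset s x - {#s#} = x"
        by simp
      show "\<And>y. y \<in> C \<Longrightarrow> add_mset s (y - {#s#}) = y" unfolding C_def by (auto intro: insert_DiffM)
    qed
    then show ?thesis using True by (simp add: p_part_def bij_betw_same_card)
  next
    case False
    have "C = {}"
    proof (rule ccontr)
      assume "C \<noteq> {}"
      then obtain M where "M \<in> C" by blast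
      then have "s \<in># M" "sum_mset M = k" unfolding C_def A_def partitions_def by auto
      then show False using sum_ge_mem[of s M] False by simp
    qed
    then show ?thesis using False by simp
  qed
  show ?thesis using cA cC unfolding A_def B_def p_part_def by simp
qed

lemma Fp_empty: "Fp {} = 1"
  by (rule fps_ext) (simp add: Fp_def p_empty)

lemma Fp_insert:
  assumes "0 < s" "s \<notin> S"
  shows "Fp (insert s S) * (1 - fps_X ^ s) = Fp S"
proof -
  have "Fp (insert s S) = Fp S + fps_X ^ s * Fp (insert s S)"
    by (rule fps_ext) (auto simp: Fp_def fps_X_power_mult_nth p_rec[OF assms])
  then show ?thesis by (simp add: algebra_simps)
qed

lemma Fp_Qf: "finite S \<Longrightarrow> \<forall>s\<in>S. 0 < s \<Longrightarrow> Fp S * Qf S = 1"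
proof (induction S rule: finite_induct)
  case empty
  then show ?case by (simp add: Fp_empty Qf_def)
next
  case (insert s S)
  have "Fp (insert s S) * Qf (insert s S) = (Fp (insert s S) * (1 - fps_X ^ s)) * Qf S"
    using insert by (simp add: Qf_def mult.assoc)
  also have "\<dots> = Fp S * Qf S" using insert by (simp add: Fp_insert)
  finally show ?case using insert by simp
qed

lemma r_p:
  assumes "finite S" "\<forall>s\<in>S. 0 < s"
  shows "r_part k S = (if \<Sum>S \<le> k then p_part (k - \<Sum>S) S else 0)"
proof (cases "\<Sum>S \<le> k")
  case True
  have sumS: "sum_mset (mset_set S) = \<Sum>S" using assms(1) by (simp add: sum_unfold_sum_mset)
  have "bij_betw (\<lambda>N. N + mset_set S) {M \<in> partitions (k - \<Sum>S). set_mset M \<subseteq> S}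
      {M \<in> partitions k. set_mset M = S}"
  proof (rule bij_betwI[where g = "\<lambda>M. M - mset_set S"])
    show "(\<lambda>N. N + mset_set S) \<in> {M \<in> partitions (k - \<Sum>S). set_mset M \<subseteq> S} \<rightarrow> {M \<in> partitions k. set_mset M = S}"
      using True assms sumS unfolding partitions_def by auto
    show "(\<lambda>M. M - mset_set S) \<in> {M \<in> partitions k. set_mset M = S} \<rightarrow> {M \<in> partitions (k - \<Sum>S). set_mset M \<subseteq> S}"
    proof
      fix M assume M: "M \<in> {M \<in> partitions k. set_mset M = S}"
      then have pos: "\<forall>x\<in>#M. 0 < x" and sum: "sum_mset M = k" and sM: "set_mset M = S"
        unfolding partitions_def by auto
      have sub: "mset_set S \<subseteq># M" using sM assms(1)
        by (metis finite_set_mset_mset_set mset_set_set_mset_msubset)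
      have e: "M - mset_set S + mset_set S = M" using sub by (rule subset_mset.diff_add)
      have "sum_mset (M - mset_set S) = k - \<Sum>S" using arg_cong[OF e, of sum_mset] sum sumS by simp
      moreover have "set_mset (M - mset_set S) \<subseteq> set_mset M" by (auto dest: in_diffD)
      ultimately show "M - mset_set S \<in> {M \<in> partitions (k - \<Sum>S). set_mset M \<subseteq> S}"
        using pos sM unfolding partitions_def by auto
    qed
    show "\<And>x. x \<in> {M \<in> partitions (k - \<Sum>S). set_mset M \<subseteq> S} \<Longrightarrow> x + mset_set S - mset_set S = x"
      by simp
    show "\<And>y. y \<in> {M \<in> partitions k. set_mset M = S} \<Longrightarrow> y - mset_set S + mset_set S = y"
      using assms(1) by (metis (mono_tags, lifting) mem_Collect_eq mset_set_set_mset_msubset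
           finite_set_mset subset_mset.diff_add)
  qed
  then show ?thesis using True by (simp add: p_part_def r_part_def bij_betw_same_card)
next
  case False
  have E: "{M \<in> partitions k. set_mset M = S} = {}"
  proof (rule ccontr)
    assume "{M \<in> partitions k. set_mset M = S} \<noteq> {}"
    then obtain M where M: "M \<in> partitions k" "set_mset M = S" by auto
    have sub: "mset_set S \<subseteq># M" using M(2) assms(1)
      by (metis finite_set_mset_mset_set mset_set_set_mset_msubset)
    have "sum_mset (mset_set S) \<le> sum_mset M" 
      using arg_cong[OF subset_mset.diff_add[OF sub], of sum_mset] by (metis le_add2 sum_mset.union)
    then have "\<Sum>S \<le> k" using M assms(1) by (simp add: partitions_def sum_unfold_sum_mset)
    then show False using False by simp
  qed
  have "r_part k S = 0" unfolding r_part_def E by (rule card.empty)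
  then show ?thesis using False by simp
qed


lemma conv:
  fixes c a :: "nat \<Rightarrow> int"
  shows "(\<Sum>j=0..N. (\<Sum>i=0..N-j. c i) * a j) = (\<Sum>k=0..N. \<Sum>i=0..k. c i * a (k-i))"
proof (induction N)
  case 0
  then show ?case by simp
next
  case (Suc N)
  have rev: "(\<Sum>j=0..Suc N. c (Suc N - j) * a j) = (\<Sum>i=0..Suc N. c i * a (Suc N - i))"
    by (subst sum.atLeastAtMost_rev) simp
  have "(\<Sum>j=0..Suc N. (\<Sum>i=0..Suc N-j. c i) * a j)
      = (\<Sum>j=0..N. (\<Sum>i=0..Suc N-j. c i) * a j) + c 0 * a (Suc N)"
    by (simp add: sum.atLeast0_atMost_Suc)
  also have "(\<Sum>j=0..N. (\<Sum>i=0..Suc N-j. c i) * a j)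
      = (\<Sum>j=0..N. (\<Sum>i=0..N-j. c i) * a j + c (Suc N - j) * a j)"
  proof (rule sum.cong)
    fix j assume "j \<in> {0..N}"
    then have "Suc N - j = Suc (N - j)" by auto
    then show "(\<Sum>i=0..Suc N-j. c i) * a j = (\<Sum>i=0..N-j. c i) * a j + c (Suc N - j) * a j"
      by (simp add: sum.atLeast0_atMost_Suc algebra_simps)
  qed simp
  also have "\<dots> = (\<Sum>j=0..N. (\<Sum>i=0..N-j. c i) * a j) + (\<Sum>j=0..N. c (Suc N - j) * a j)"
    by (simp add: sum.distrib)
  finally have "(\<Sum>j=0..Suc N. (\<Sum>i=0..Suc N-j. c i) * a j)
      = (\<Sum>j=0..N. (\<Sum>i=0..N-j. c i) * a j) + (\<Sum>j=0..Suc N. c (Suc N - j) * a j)"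
    by (simp add: sum.atLeast0_atMost_Suc)
  also have "\<dots> = (\<Sum>k=0..N. \<Sum>i=0..k. c i * a (k-i)) + (\<Sum>i=0..Suc N. c i * a (Suc N - i))"
    using Suc rev by simp
  finally show ?case by (simp add: sum.atLeast0_atMost_Suc)
qed

definition QP :: "nat set \<Rightarrow> int poly" where
  "QP T = (\<Prod>i\<in>T. 1 - monom 1 i)"

lemma degree_QP: "finite T \<Longrightarrow> degree (QP T) \<le> \<Sum>T"
proof -
  assume f: "finite T"
  have "degree (QP T) \<le> sum (degree \<circ> (\<lambda>i. 1 - monom (1::int) i)) T"
    unfolding QP_def using f by (rule degree_prod_sum_le)
  also have "\<dots> \<le> \<Sum>T"
    by (rule sum_mono) (auto intro!: degree_diff_le simp: degree_monom_le)
  finally show ?thesis .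
qed

lemma poly_QP: "finite T \<Longrightarrow> poly (QP T) 1 = (if T = {} then 1 else 0)"
  by (simp add: QP_def poly_prod poly_monom card_gt_0_iff)

lemma fps_QP: "fps_of_poly (QP T) = Qf T"
  by (simp add: QP_def Qf_def fps_of_poly_prod fps_of_poly_diff fps_of_poly_monom')

lemma sum_coeff: "degree (R::int poly) \<le> n \<Longrightarrow> (\<Sum>k=0..n. coeff R k) = poly R 1"
proof -
  assume d: "degree R \<le> n"
  have "poly R 1 = (\<Sum>k\<le>degree R. coeff R k)" by (simp add: poly_altdef)
  also have "\<dots> = (\<Sum>k=0..n. coeff R k)"
    by (rule sum.mono_neutral_left) (use d in \<open>auto simp: coeff_eq_0\<close>)
  finally show ?thesis by simp
qed

theorem propositionA:
  fixes m :: nat and S :: "nat set"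
  assumes "0 < m" and "S \<noteq> {}" and "S \<subseteq> {1..m}"
  defines "n \<equiv> m * (m + 1) div 2"
  shows "(\<Sum>j=1..n. d_coeff m j * int (r_part j S)) = (\<Sum>j=1..n. d_coeff m j * int (p_part j S))
       \<and> (\<Sum>j=1..n. d_coeff m j * int (p_part j S)) = (if S = {1..m} then 1 else 0)"
proof -
  define T where "T = {1..m} - S"
  have fS: "finite S" using assms(3) finite_subset by blast
  have fT: "finite T" unfolding T_def by simp
  have posS: "\<forall>s\<in>S. 0 < s" using assms(3) by auto
  have nsum: "\<Sum>{1..m} = n" unfolding n_def using gauss_sum_from_Suc_0[of m, where ?'a = nat] by simp
  have sST: "\<Sum>S + \<Sum>T = n"
    using sum.subset_diff[OF assms(3), of "\<lambda>x. x"] nsum unfolding T_def by simp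
  have Peq: "euler_poly m = QP T * QP S"
    unfolding euler_poly_def QP_def T_def using prod.subset_diff[OF assms(3)] by simp
  have degP: "degree (euler_poly m) \<le> n"
    using degree_QP[of "{1..m}"] nsum by (simp add: euler_poly_def QP_def)
  have P1: "poly (euler_poly m) 1 = 0"
    using poly_QP[of "{1..m}"] assms(1) by (simp add: euler_poly_def QP_def)
  have d0: "d_coeff m 0 = 0"
    unfolding d_coeff_def c_coeff_def n_def[symmetric] using sum_coeff[OF degP] P1 by simp
  have gen: "(\<Sum>j=1..n. d_coeff m j * a j) = (\<Sum>k=0..n. (fps_of_poly (euler_poly m) * Abs_fps a) $ k)"
    for a :: "nat \<Rightarrow> int"
  proof -
    have "(\<Sum>j=1..n. d_coeff m j * a j) = (\<Sum>j=0..n. d_coeff m j * a j)"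
      using d0 by (simp add: sum.atLeast_Suc_atMost[of 0 n])
    also have "\<dots> = (\<Sum>j=0..n. (\<Sum>i=0..n-j. c_coeff m i) * a j)"
      unfolding d_coeff_def n_def by simp
    also have "\<dots> = (\<Sum>k=0..n. \<Sum>i=0..k. c_coeff m i * a (k-i))" by (rule conv)
    also have "\<dots> = (\<Sum>k=0..n. (fps_of_poly (euler_poly m) * Abs_fps a) $ k)"
      by (simp add: fps_mult_nth c_coeff_def)
    finally show ?thesis .
  qed
  have FQ: "Fp S * Qf S = 1" using Fp_Qf[OF fS posS] .
  have pval: "(\<Sum>j=1..n. d_coeff m j * int (p_part j S)) = poly (QP T) 1"
  proof -
    have "fps_of_poly (euler_poly m) * Abs_fps (\<lambda>j. int (p_part j S)) = fps_of_poly (QP T)"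
      using FQ unfolding Peq fps_of_poly_mult fps_QP Fp_def[symmetric]
      by (simp add: algebra_simps)
    then show ?thesis using gen[of "\<lambda>j. int (p_part j S)"] sum_coeff degree_QP[OF fT] sST
      by (metis fps_of_poly_nth le_add2 order_trans sum.cong)
  qed
  have rval: "(\<Sum>j=1..n. d_coeff m j * int (r_part j S)) = poly (QP T) 1"
  proof -
    have R: "Abs_fps (\<lambda>j. int (r_part j S)) = fps_X ^ (\<Sum>S) * Fp S"
      by (rule fps_ext) (simp add: r_p[OF fS posS] fps_X_power_mult_nth Fp_def)
    have "fps_of_poly (euler_poly m) * Abs_fps (\<lambda>j. int (r_part j S)) = fps_of_poly (monom 1 (\<Sum>S) * QP T)"
      using FQ unfolding R Peq fps_of_poly_mult fps_QP fps_of_poly_monom'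
      by (simp add: algebra_simps)
    moreover have "degree (monom (1::int) (\<Sum>S) * QP T) \<le> n"
      using degree_mult_le[of "monom (1::int) (\<Sum>S)" "QP T"] degree_QP[OF fT] sST degree_monom_le[of "1::int" "\<Sum>S"]
      by linarith
    ultimately show ?thesis using gen[of "\<lambda>j. int (r_part j S)"] sum_coeff
      by (simp add: poly_monom)
  qed
  have "T = {} \<longleftrightarrow> S = {1..m}" unfolding T_def using assms(3) by auto
  then show ?thesis using pval rval poly_QP[OF fT] by simp
qed

end
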